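(* Let $p$ and $\ell$ be positive integers, let $\bar J_1,\dots,\bar J_p\in\mathcal{E}^+(X)$, and let $\bar J(x)=\min_{i=1,\dots,p}\bar J_i(x)$ for all $x\in X$. Then: (a) For all $x\in X$, $$\min_{u\in U(x)}\big\{g(x,u)+(T^{\ell-1}\bar J)(f(x,u))\big\}=\min_{i=1,\dots,p}\Big[\min_{u\in U(x)}\big\{g(x,u)+(T^{\ell-1}\bar J_i)(f(x,u))\big\}\Big],$$ equivalently $(T^\ell\bar J)(x)=\min_{i=1,\dots,p}(T^\ell\bar J_i)(x)$. (b) For all $x\in X$, $\tilde U(T^{\ell-1}\bar J,x)=\bigcup_{i\in\tilde I(\ell,x)}\tilde U(T^{\ell-1}\bar J_i,x)$, where $\tilde I(\ell,x)=\arg\min_{i=1,\dots,p}(T^\ell\bar J_i)(x)$.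
   Context: Setting: $X$ (state space) and $U$ (control space) are sets; for each $x\in X$, $U(x)\subset U$ is nonempty; $f:X\times U\to X$; the stage cost $g$ satisfies $0\le g(x,u)\le\infty$ for all $x\in X$, $u\in U(x)$. $\mathcal{E}^+(X)$ denotes the set of all functions $J:X\to[0,\infty]$. The Bellman operator $T:\mathcal{E}^+(X)\to\mathcal{E}^+(X)$ is $(TJ)(x)=\inf_{u\in U(x)}\{g(x,u)+J(f(x,u))\}$; $T^\ell$ is its $\ell$-fold composition, with $T^0J=J$. Standing assumption: for every $J\in\mathcal{E}^+(X)$ and every $x\in X$, the infimum defining $(TJ)(x)$ is attained. For $J\in\mathcal{E}^+(X)$ and $x\in X$, $\tilde U(J,x)=\arg\min_{u\in U(x)}\{g(x,u)+J(f(x,u))\}$. *)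

theory Defs
  imports "HOL-Library.Extended_Nonnegative_Real"
begin

text \<open>Functions J : X -> [0,infinity] are modelled as functions into ennreal.
  U x is the control constraint set, f the system function, g the stage cost.\<close>

definition bellman ::
  "('x \<Rightarrow> 'u set) \<Rightarrow> ('x \<Rightarrow> 'u \<Rightarrow> 'x) \<Rightarrow> ('x \<Rightarrow> 'u \<Rightarrow> ennreal)
   \<Rightarrow> ('x \<Rightarrow> ennreal) \<Rightarrow> ('x \<Rightarrow> ennreal)" where
  "bellman U f g J = (\<lambda>x. (INF u\<in>U x. g x u + J (f x u)))"

definition inf_attained ::
  "('x \<Rightarrow> 'u set) \<Rightarrow> ('x \<Rightarrow> 'u \<Rightarrow> 'x) \<Rightarrow> ('x \<Rightarrow> 'u \<Rightarrow> ennreal) \<Rightarrow> bool" where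
  "inf_attained U f g = (\<forall>J x. \<exists>u\<in>U x. g x u + J (f x u) = bellman U f g J x)"

definition Utilde ::
  "('x \<Rightarrow> 'u set) \<Rightarrow> ('x \<Rightarrow> 'u \<Rightarrow> 'x) \<Rightarrow> ('x \<Rightarrow> 'u \<Rightarrow> ennreal)
   \<Rightarrow> ('x \<Rightarrow> ennreal) \<Rightarrow> 'x \<Rightarrow> 'u set" where
  "Utilde U f g J x = {u \<in> U x. \<forall>v\<in>U x. g x u + J (f x u) \<le> g x v + J (f x v)}"

end

theory Submission
  imports Defs
begin

lemma INF_Min_swap:
  fixes h :: "nat \<Rightarrow> 'u \<Rightarrow> ennreal"
  assumes "finite I" "I \<noteq> {}"
  shows "(INF u\<in>A. Min ((\<lambda>i. h i u) ` I)) = Min ((\<lambda>i. INF u\<in>A. h i u) ` I)"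
proof -
  have "(INF u\<in>A. Min ((\<lambda>i. h i u) ` I)) = (INF u\<in>A. INF i\<in>I. h i u)"
    using assms by (simp add: Min_Inf)
  also have "\<dots> = (INF i\<in>I. INF u\<in>A. h i u)" by (rule INF_commute)
  also have "\<dots> = Min ((\<lambda>i. INF u\<in>A. h i u) ` I)" using assms by (simp add: Min_Inf)
  finally show ?thesis .
qed

lemma add_Min:
  fixes c :: ennreal and h :: "nat \<Rightarrow> ennreal"
  assumes "finite I" "I \<noteq> {}"
  shows "c + Min (h ` I) = Min ((\<lambda>i. c + h i) ` I)"
proof -
  have m: "mono (\<lambda>y::ennreal. c + y)" by (auto intro: monoI add_left_mono)
  have "c + Min (h ` I) = Min ((\<lambda>y. c + y) ` (h ` I))"
    using mono_Min_commute[OF m] assms by simp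
  then show ?thesis by (simp add: image_image)
qed

lemma bellman_Min:
  fixes I :: "nat set"
  assumes "finite I" "I \<noteq> {}"
  shows "bellman U f g (\<lambda>x. Min ((\<lambda>i. Jb i x) ` I)) x
       = Min ((\<lambda>i. bellman U f g (Jb i) x) ` I)"
proof -
  have "bellman U f g (\<lambda>x. Min ((\<lambda>i. Jb i x) ` I)) x
      = (INF u\<in>U x. Min ((\<lambda>i. g x u + Jb i (f x u)) ` I))"
    unfolding bellman_def using add_Min[OF assms] by simp
  also have "\<dots> = Min ((\<lambda>i. bellman U f g (Jb i) x) ` I)"
    unfolding bellman_def by (rule INF_Min_swap[OF assms])
  finally show ?thesis .
qed

lemma iter_Min:
  fixes I :: "nat set"
  assumes "finite I" "I \<noteq> {}"
  shows "(bellman U f g ^^ k) (\<lambda>x. Min ((\<lambda>i. Jb i x) ` I)) x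
       = Min ((\<lambda>i. (bellman U f g ^^ k) (Jb i) x) ` I)"
proof (induction k arbitrary: x)
  case 0
  then show ?case by simp
next
  case (Suc k)
  have e: "(bellman U f g ^^ k) (\<lambda>x. Min ((\<lambda>i. Jb i x) ` I))
         = (\<lambda>x. Min ((\<lambda>i. (bellman U f g ^^ k) (Jb i) x) ` I))"
    using Suc.IH by auto
  show ?case
    using bellman_Min[OF assms, of U f g "\<lambda>i. (bellman U f g ^^ k) (Jb i)" x]
    by (simp add: e)
qed

theorem corollary1:
  fixes U :: "'x \<Rightarrow> 'u set" and f :: "'x \<Rightarrow> 'u \<Rightarrow> 'x" and g :: "'x \<Rightarrow> 'u \<Rightarrow> ennreal"
    and p l :: nat and Jb :: "nat \<Rightarrow> 'x \<Rightarrow> ennreal" and J :: "'x \<Rightarrow> ennreal"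
  assumes U_ne: "\<And>x. U x \<noteq> {}"
    and attained: "inf_attained U f g"
    and p_pos: "p \<ge> 1" and l_pos: "l \<ge> 1"
    and J_def: "\<And>x. J x = Min ((\<lambda>i. Jb i x) ` {1..p})"
  shows "(\<forall>x. (INF u\<in>U x. g x u + (bellman U f g ^^ (l - 1)) J (f x u))
              = Min ((\<lambda>i. INF u\<in>U x. g x u + (bellman U f g ^^ (l - 1)) (Jb i) (f x u)) ` {1..p})
            \<and> (bellman U f g ^^ l) J x = Min ((\<lambda>i. (bellman U f g ^^ l) (Jb i) x) ` {1..p}))
       \<and> (\<forall>x. Utilde U f g ((bellman U f g ^^ (l - 1)) J) x
              = (\<Union>i\<in>{i \<in> {1..p}. \<forall>k\<in>{1..p}. (bellman U f g ^^ l) (Jb i) x \<le> (bellman U f g ^^ l) (Jb k) x}.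
                   Utilde U f g ((bellman U f g ^^ (l - 1)) (Jb i)) x))"
proof -
  let ?T = "bellman U f g"
  have fin: "finite {1..p}" and ne: "{1..p} \<noteq> {}" using p_pos by auto
  have Jeq: "J = (\<lambda>x. Min ((\<lambda>i. Jb i x) ` {1..p}))" using J_def by auto
  have lsuc: "l = Suc (l - 1)" using l_pos by simp
  have Tl: "\<And>K x. (?T ^^ l) K x = (INF u\<in>U x. g x u + (?T ^^ (l - 1)) K (f x u))"
  proof -
    fix K x
    have "(?T ^^ l) K x = ?T ((?T ^^ (l - 1)) K) x"
      using lsuc by (metis comp_apply funpow.simps(2))
    then show "(?T ^^ l) K x = (INF u\<in>U x. g x u + (?T ^^ (l - 1)) K (f x u))"
      by (simp only: bellman_def)
  qed
  have itl: "\<And>k x. (?T ^^ k) J x = Min ((\<lambda>i. (?T ^^ k) (Jb i) x) ` {1..p})"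
    unfolding Jeq by (rule iter_Min[OF fin ne])
  have A: "\<forall>x. (INF u\<in>U x. g x u + (?T ^^ (l - 1)) J (f x u))
              = Min ((\<lambda>i. INF u\<in>U x. g x u + (?T ^^ (l - 1)) (Jb i) (f x u)) ` {1..p})
            \<and> (?T ^^ l) J x = Min ((\<lambda>i. (?T ^^ l) (Jb i) x) ` {1..p})"
  proof
    fix x
    show "(INF u\<in>U x. g x u + (?T ^^ (l - 1)) J (f x u))
              = Min ((\<lambda>i. INF u\<in>U x. g x u + (?T ^^ (l - 1)) (Jb i) (f x u)) ` {1..p})
            \<and> (?T ^^ l) J x = Min ((\<lambda>i. (?T ^^ l) (Jb i) x) ` {1..p})"
      using itl[of l x] by (simp only: Tl)
  qed
  have B: "Utilde U f g ((?T ^^ (l - 1)) J) x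
              = (\<Union>i\<in>{i \<in> {1..p}. \<forall>k\<in>{1..p}. (?T ^^ l) (Jb i) x \<le> (?T ^^ l) (Jb k) x}.
                   Utilde U f g ((?T ^^ (l - 1)) (Jb i)) x)" for x
  proof -
    define Q where "Q i u = g x u + (?T ^^ (l - 1)) (Jb i) (f x u)" for i u
    define Q0 where "Q0 u = g x u + (?T ^^ (l - 1)) J (f x u)" for u
    define m where "m = (?T ^^ l) J x"
    have Q0Q: "Q0 u = Min ((\<lambda>i. Q i u) ` {1..p})" for u
      unfolding Q0_def Q_def itl using add_Min[OF fin ne] by simp
    have TQ: "(?T ^^ l) (Jb i) x = (INF u\<in>U x. Q i u)" for i unfolding Q_def Tl ..
    have TQ0: "m = (INF u\<in>U x. Q0 u)" unfolding m_def Q0_def Tl ..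
    have mmin: "m = Min ((\<lambda>i. (?T ^^ l) (Jb i) x) ` {1..p})" unfolding m_def by (rule itl)
    have mle: "m \<le> (?T ^^ l) (Jb i) x" if "i \<in> {1..p}" for i
      unfolding mmin using fin that by simp
    have ex: "\<exists>i\<in>{1..p}. (?T ^^ l) (Jb i) x = m"
    proof -
      have "Min ((\<lambda>i. (?T ^^ l) (Jb i) x) ` {1..p}) \<in> (\<lambda>i. (?T ^^ l) (Jb i) x) ` {1..p}"
        using fin ne by (intro Min_in) auto
      then obtain i where "Min ((\<lambda>i. (?T ^^ l) (Jb i) x) ` {1..p}) = (?T ^^ l) (Jb i) x" "i \<in> {1..p}"
        by (rule imageE)
      then show ?thesis unfolding mmin by (intro bexI[of _ i]) simp_all
    qed
    have U0: "Utilde U f g ((?T ^^ (l - 1)) J) x = {u \<in> U x. Q0 u \<le> m}"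
      unfolding Utilde_def TQ0 Q0_def[symmetric] le_INF_iff by (rule refl)
    have Ui: "Utilde U f g ((?T ^^ (l - 1)) (Jb i)) x = {u \<in> U x. Q i u \<le> (?T ^^ l) (Jb i) x}" for i
      unfolding Utilde_def TQ Q_def[symmetric] le_INF_iff by (rule refl)
    show ?thesis
    proof (rule set_eqI, rule iffI)
      fix u assume "u \<in> Utilde U f g ((?T ^^ (l - 1)) J) x"
      then have u: "u \<in> U x" "Q0 u \<le> m" using U0 by auto
      have "Min ((\<lambda>i. Q i u) ` {1..p}) \<in> (\<lambda>i. Q i u) ` {1..p}"
        using fin ne by (intro Min_in) auto
      then obtain i where i0: "Min ((\<lambda>i. Q i u) ` {1..p}) = Q i u" "i \<in> {1..p}"
        by (rule imageE)
      then have i: "i \<in> {1..p}" "Q0 u = Q i u" using Q0Q by simp_all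
      have "(?T ^^ l) (Jb i) x \<le> Q i u" unfolding TQ using u(1) by (rule INF_lower)
      then have "(?T ^^ l) (Jb i) x \<le> m" using u i by simp
      then have am: "\<forall>k\<in>{1..p}. (?T ^^ l) (Jb i) x \<le> (?T ^^ l) (Jb k) x"
        using mle order_trans by blast
      have "Q i u \<le> (?T ^^ l) (Jb i) x" using u i mle[OF i(1)] by simp
      then show "u \<in> (\<Union>i\<in>{i \<in> {1..p}. \<forall>k\<in>{1..p}. (?T ^^ l) (Jb i) x \<le> (?T ^^ l) (Jb k) x}.
                   Utilde U f g ((?T ^^ (l - 1)) (Jb i)) x)"
        using i(1) am u(1) Ui by blast
    next
      fix u assume "u \<in> (\<Union>i\<in>{i \<in> {1..p}. \<forall>k\<in>{1..p}. (?T ^^ l) (Jb i) x \<le> (?T ^^ l) (Jb k) x}.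
                   Utilde U f g ((?T ^^ (l - 1)) (Jb i)) x)"
      then obtain i where i: "i \<in> {1..p}" "\<forall>k\<in>{1..p}. (?T ^^ l) (Jb i) x \<le> (?T ^^ l) (Jb k) x"
        and u: "u \<in> U x" "Q i u \<le> (?T ^^ l) (Jb i) x" using Ui by blast
      obtain k where k: "k \<in> {1..p}" "(?T ^^ l) (Jb k) x = m" using ex by blast
      have "Q0 u \<le> Q i u" unfolding Q0Q using fin i(1) by simp
      also have "\<dots> \<le> m" using u(2) i(2) k by (metis order_trans)
      finally show "u \<in> Utilde U f g ((?T ^^ (l - 1)) J) x" using U0 u(1) by blast
    qed
  qed
  show ?thesis using A B by blast
qed

end
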